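(* Let $\mathcal{H}$ be a finite-dimensional Hilbert space. Every connected spanning set of pure states in $\mathcal{H}$ contains a subset that is a connected basis of $\mathcal{H}$. Every set of pure states in $\mathcal{H}$ that contains a connected spanning subset is itself a connected spanning set.
   Context: The transition graph of a set $\{|\psi_j\rangle\}$ of pure states has vertices the states, with two distinct vertices adjacent iff their inner product is nonzero; the set is connected if this graph is connected. A connected spanning set is a connected set spanning $\mathcal{H}$; a connected basis is a connected set that is a basis of $\mathcal{H}$. *)

theory Defs
  imports "HOL-Analysis.Analysis"
begin

text \<open>The finite-dimensional Hilbert space is modelled as complex^'n (any finite index type 'n),
  with the standard inner product (conjugate-linear in the first argument).
  Spans and linear independence are taken over the complex field (vec.span, vec.independent).\<close>

definition cinner :: "complex ^ 'n \<Rightarrow> complex ^ 'n \<Rightarrow> complex" where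
  "cinner x y = (\<Sum>i\<in>UNIV. cnj (x $ i) * y $ i)"

definition pure_state :: "complex ^ 'n \<Rightarrow> bool" where
  "pure_state x \<longleftrightarrow> cinner x x = 1"

definition transition_adj :: "(complex ^ 'n) set \<Rightarrow> complex ^ 'n \<Rightarrow> complex ^ 'n \<Rightarrow> bool" where
  "transition_adj S x y \<longleftrightarrow> x \<in> S \<and> y \<in> S \<and> x \<noteq> y \<and> cinner x y \<noteq> 0"

definition connected_states :: "(complex ^ 'n) set \<Rightarrow> bool" where
  "connected_states S \<longleftrightarrow> (\<forall>x\<in>S. \<forall>y\<in>S. (transition_adj S)\<^sup>*\<^sup>* x y)"

definition connected_spanning_set :: "(complex ^ 'n) set \<Rightarrow> bool" where
  "connected_spanning_set S \<longleftrightarrow>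
     (\<forall>x\<in>S. pure_state x) \<and> connected_states S \<and> vec.span S = UNIV"

definition connected_basis :: "(complex ^ 'n) set \<Rightarrow> bool" where
  "connected_basis B \<longleftrightarrow>
     (\<forall>x\<in>B. pure_state x) \<and> connected_states B \<and> vec.independent B \<and> vec.span B = UNIV"

end

theory Submission
  imports Defs
begin

lemma cinner_subspace: "vec.subspace {y :: complex ^ 'n. cinner x y = 0}"
proof -
  have "(\<Sum>i\<in>UNIV. cnj (x $ i) * (c * y $ i)) = c * (\<Sum>i\<in>UNIV. cnj (x $ i) * y $ i)" for c y
    by (simp add: sum_distrib_left mult_ac)
  thus ?thesis unfolding vec.subspace_def
    by (auto simp: cinner_def distrib_left sum.distrib)
qed

lemma cinner_span_zero:
  fixes x :: "complex ^ 'n"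
  assumes "\<forall>s\<in>S. cinner x s = 0" "y \<in> vec.span S"
  shows "cinner x y = 0"
proof -
  have "vec.span S \<subseteq> {y. cinner x y = 0}"
    by (rule vec.span_minimal) (use assms(1) cinner_subspace in auto)
  thus ?thesis using assms(2) by auto
qed

lemma cinner_sym: "cinner y x = cnj (cinner x y)"
  by (simp add: cinner_def mult_ac)

lemma pure_nz: "pure_state x \<Longrightarrow> x \<noteq> 0"
  by (auto simp: pure_state_def cinner_def)

lemma orth_span_UNIV:
  fixes x :: "complex ^ 'n"
  assumes "vec.span S = UNIV" "pure_state x"
  shows "\<exists>s\<in>S. cinner x s \<noteq> 0"
proof (rule ccontr)
  assume "\<not> ?thesis"
  hence "cinner x x = 0" using cinner_span_zero[of S x x] assms(1) by auto
  thus False using assms(2) by (simp add: pure_state_def)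
qed

lemma adj_mono: "S \<subseteq> T \<Longrightarrow> transition_adj S x y \<Longrightarrow> transition_adj T x y"
  by (auto simp: transition_adj_def)

lemma rtr_mono: "S \<subseteq> T \<Longrightarrow> (transition_adj S)\<^sup>*\<^sup>* x y \<Longrightarrow> (transition_adj T)\<^sup>*\<^sup>* x y"
  by (metis (no_types, lifting) adj_mono mono_rtranclp)

lemma adj_sym: "transition_adj S x y \<Longrightarrow> transition_adj S y x"
  by (auto simp: transition_adj_def cinner_sym[of x y])

lemma rtr_sym: "(transition_adj S)\<^sup>*\<^sup>* x y \<Longrightarrow> (transition_adj S)\<^sup>*\<^sup>* y x"
  by (induction rule: rtranclp_induct) (auto intro: converse_rtranclp_into_rtranclp adj_sym)

lemma cross: "R\<^sup>*\<^sup>* x y \<Longrightarrow> P x \<Longrightarrow> \<not> P y \<Longrightarrow> \<exists>u v. R u v \<and> P u \<and> \<not> P v"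
  by (induction rule: rtranclp_induct) auto

lemma connected_insert:
  assumes "connected_states B" "b \<in> B" "v \<noteq> b" "cinner v b \<noteq> 0"
  shows "connected_states (insert v B)"
proof -
  let ?R = "transition_adj (insert v B)"
  have e: "?R v b" using assms by (auto simp: transition_adj_def)
  have inB: "?R\<^sup>*\<^sup>* x y" if "x \<in> B" "y \<in> B" for x y
    using assms(1) that rtr_mono[of B "insert v B"] by (auto simp: connected_states_def)
  have vB: "?R\<^sup>*\<^sup>* v y" if "y \<in> B" for y
    using e inB[OF assms(2) that] by (meson converse_rtranclp_into_rtranclp)
  show ?thesis unfolding connected_states_def
  proof (intro ballI)
    fix x y assume x: "x \<in> insert v B" and y: "y \<in> insert v B"
    show "?R\<^sup>*\<^sup>* x y"
    proof (cases "x = v")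
      case True
      show ?thesis
      proof (cases "y = v")
        case True with \<open>x = v\<close> show ?thesis by simp
      next
        case False with y True vB show ?thesis by auto
      qed
    next
      case False
      hence xB: "x \<in> B" using x by auto
      show ?thesis
      proof (cases "y = v")
        case True with vB[OF xB] rtr_sym show ?thesis by blast
      next
        case False with y xB inB show ?thesis by auto
      qed
    qed
  qed
qed

lemma part2:
  fixes S T :: "(complex ^ 'n) set"
  assumes "\<forall>x\<in>T. pure_state x" "S \<subseteq> T" "connected_spanning_set S"
  shows "connected_spanning_set T"
proof -
  have sp: "vec.span S = UNIV" and cS: "connected_states S"
    using assms(3) by (auto simp: connected_spanning_set_def)
  have spT: "vec.span T = UNIV" using vec.span_mono[OF assms(2)] sp by auto
  have toS: "\<exists>s\<in>S. (transition_adj T)\<^sup>*\<^sup>* x s" if "x \<in> T" for x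
  proof (cases "x \<in> S")
    case True then show ?thesis by blast
  next
    case False
    have "pure_state x" using assms(1) that by blast
    then obtain s where s: "s \<in> S" "cinner x s \<noteq> 0"
      using orth_span_UNIV[OF sp] by blast
    have "s \<in> T" using s(1) assms(2) by blast
    moreover have "x \<noteq> s" using s(1) False by blast
    ultimately have "transition_adj T x s" using s(2) that
      unfolding transition_adj_def by blast
    thus ?thesis using s by blast
  qed
  have "connected_states T" unfolding connected_states_def
  proof (intro ballI)
    fix x y assume "x \<in> T" "y \<in> T"
    then obtain s t where st: "s \<in> S" "t \<in> S" and xs: "(transition_adj T)\<^sup>*\<^sup>* x s" and yt: "(transition_adj T)\<^sup>*\<^sup>* y t"
      using toS by blast
    have "(transition_adj S)\<^sup>*\<^sup>* s t"
      using cS st unfolding connected_states_def by blast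
    hence stT: "(transition_adj T)\<^sup>*\<^sup>* s t" by (rule rtr_mono[OF assms(2)])
    show "(transition_adj T)\<^sup>*\<^sup>* x y"
      by (rule rtranclp_trans[OF rtranclp_trans[OF xs stT] rtr_sym[OF yt]])
  qed
  thus ?thesis using assms(1) spT by (simp add: connected_spanning_set_def)
qed

lemma part1:
  fixes S :: "(complex ^ 'n) set"
  assumes "connected_spanning_set S"
  shows "\<exists>B\<subseteq>S. connected_basis B"
proof -
  have pS: "\<forall>x\<in>S. pure_state x" and sp: "vec.span S = UNIV" and cS: "connected_states S"
    using assms by (auto simp: connected_spanning_set_def)
  have "S \<noteq> {}"
  proof
    assume "S = {}"
    hence "vec.span S = {0}" by simp
    moreover have "(\<chi> i. (1::complex)) \<noteq> 0" by (metis vec_lambda_beta zero_index zero_neq_one)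
    ultimately show False using sp by auto
  qed
  then obtain s0 where s0: "s0 \<in> S" by blast
  define C where "C = {B. B \<subseteq> S \<and> B \<noteq> {} \<and> connected_states B \<and> vec.independent B}"
  have s0C: "{s0} \<in> C"
    using s0 pure_nz pS
    by (auto simp: C_def connected_states_def vec.independent_insert)
  have bnd: "card B \<le> vec.dim (UNIV :: (complex ^ 'n) set)" if "B \<in> C" for B
  proof -
    have "vec.independent B" using that by (auto simp: C_def)
    hence "card B \<le> vec.dim B" using vec.independent_bound_general by blast
    also have "\<dots> \<le> vec.dim (UNIV :: (complex ^ 'n) set)" by (rule vec.dim_subset) auto
    finally show ?thesis .
  qed
  have fin: "finite (card ` C)"
    by (rule finite_subset[of _ "{..vec.dim (UNIV :: (complex ^ 'n) set)}"]) (use bnd in auto)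
  define m where "m = Max (card ` C)"
  have "m \<in> card ` C" unfolding m_def using fin s0C by (intro Max_in) auto
  then obtain B where BC: "B \<in> C" and cB: "card B = m" by blast
  have maxB: "card B' \<le> card B" if "B' \<in> C" for B'
    using cB fin that m_def by auto
  have BS: "B \<subseteq> S" and Bne: "B \<noteq> {}" and cBc: "connected_states B" and iB: "vec.independent B"
    using BC by (auto simp: C_def)
  have finB: "finite B" using iB vec.finiteI_independent by blast
  have spB: "vec.span B = UNIV"
  proof (rule ccontr)
    assume "vec.span B \<noteq> UNIV"
    have "\<not> S \<subseteq> vec.span B"
    proof
      assume "S \<subseteq> vec.span B"
      hence "vec.span S \<subseteq> vec.span B" using vec.span_minimal vec.subspace_span by blast
      thus False using sp \<open>vec.span B \<noteq> UNIV\<close> by auto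
    qed
    then obtain s where s: "s \<in> S" "s \<notin> vec.span B" by blast
    obtain b0 where b0: "b0 \<in> B" using Bne by blast
    have "(transition_adj S)\<^sup>*\<^sup>* b0 s" using cS b0 BS s by (auto simp: connected_states_def)
    moreover have "b0 \<in> vec.span B" using b0 vec.span_base by blast
    ultimately obtain u v where uv: "transition_adj S u v" "u \<in> vec.span B" "v \<notin> vec.span B"
      using cross[of "transition_adj S" b0 s "\<lambda>x. x \<in> vec.span B"] s by blast
    have vS: "v \<in> S" and uvi: "cinner v u \<noteq> 0"
      using uv(1) cinner_sym[of u v] by (auto simp: transition_adj_def)
    obtain b where b: "b \<in> B" "cinner v b \<noteq> 0"
      using cinner_span_zero[of B v u] uv(2) uvi by blast
    have vb: "v \<noteq> b" using b(1) uv(3) vec.span_base by blast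
    have vnB: "v \<notin> B" using uv(3) vec.span_base by blast
    have "insert v B \<in> C"
      using connected_insert[OF cBc b(1) vb b(2)] vS BS iB uv(3) vnB
      by (auto simp: C_def vec.independent_insert)
    hence "card (insert v B) \<le> card B" by (rule maxB)
    thus False using finB vnB by simp
  qed
  have "connected_basis B" using spB cBc iB BS pS by (auto simp: connected_basis_def)
  thus ?thesis using BS by blast
qed

theorem lemma5:
  shows "(\<forall>S :: (complex ^ 'n) set. connected_spanning_set S \<longrightarrow>
            (\<exists>B\<subseteq>S. connected_basis B))
       \<and> (\<forall>S T :: (complex ^ 'n) set. (\<forall>x\<in>T. pure_state x) \<and> S \<subseteq> T \<and> connected_spanning_set S \<longrightarrow>
            connected_spanning_set T)"
  using part1 part2 by blast

end
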